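(* Consider a sequence of triples $(p,a,k)$ with $p$ prime, $p\to\infty$, $a\in\mathbb{Z}_p^\times$, $2\le k\le p-2$ and $\gcd(k,p-1)=1$. If $k=o(p/\log^8 p)$, then $D(\eta_{a,k})=o(p)$, i.e., the sequence $\eta_{a,k}$ is quasirandom.
   Context: $\eta_{a,k}$ is the permutation of $\mathbb{Z}_p$ given by $\eta_{a,k}(s)=as^k$. An interval of $\mathbb{Z}_n$ is any subset that is the image of an interval of consecutive integers under the projection $\mathbb{Z}\to\mathbb{Z}_n$ (wrap-around allowed). For $S,T\subseteq\mathbb{Z}_n$, $D_T(S)=\bigl|\,|S\cap T|-|S||T|/n\,\bigr|$, and for a permutation $\sigma$ of $\mathbb{Z}_n$, $D(\sigma)=\max_{I,J}D_J(\sigma(I))$ over all intervals $I,J$ of $\mathbb{Z}_n$. A sequence of permutations $\sigma$ of $\mathbb{Z}_{n}$ with $n\to\infty$ is quasirandom if $D(\sigma)=o(n)$. *)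

theory Defs
  imports Complex_Main "HOL-Library.Landau_Symbols" "HOL-Computational_Algebra.Primes"
begin

text \<open>Elements of Z_n are represented by the naturals 0..n-1.
  An interval of Z_n is the image of a block of consecutive integers under reduction mod n.\<close>
definition zn_interval :: "nat \<Rightarrow> nat set \<Rightarrow> bool" where
  "zn_interval n I \<longleftrightarrow> (\<exists>s len. I = (\<lambda>i. (s + i) mod n) ` {..<len})"

definition discr :: "nat \<Rightarrow> nat set \<Rightarrow> nat set \<Rightarrow> real" where
  "discr n T S = \<bar>real (card (S \<inter> T)) - real (card S) * real (card T) / real n\<bar>"

definition perm_discrepancy :: "nat \<Rightarrow> (nat \<Rightarrow> nat) \<Rightarrow> real" where
  "perm_discrepancy n \<sigma> =
     Max {discr n J (\<sigma> ` I) | I J. zn_interval n I \<and> zn_interval n J}"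

definition eta :: "nat \<Rightarrow> nat \<Rightarrow> nat \<Rightarrow> nat \<Rightarrow> nat" where
  "eta p a k s = (a * s ^ k) mod p"

end

theory Submission
  imports Defs "HOL-Number_Theory.Number_Theory" "HOL-Computational_Algebra.Polynomial"
begin


definition ep :: "nat \<Rightarrow> int \<Rightarrow> complex" where
  "ep p x = cis (2 * pi * of_int x / of_nat p)"

lemma ep_add: "ep p (x + y) = ep p x * ep p y"
  by (simp add: ep_def cis_mult add_divide_distrib distrib_left)

lemma ep_0 [simp]: "ep p 0 = 1"
  by (simp add: ep_def)

lemma ep_mult_p: assumes "p > 0" shows "ep p (int p * q) = 1"
proof -
  have "2 * pi * of_int (int p * q) / of_nat p = 2 * pi * of_int q"
    using assms by (simp add: field_simps)
  then show ?thesis by (simp add: ep_def)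
qed

lemma ep_cong: assumes "p > 0" "[x = y] (mod int p)" shows "ep p x = ep p y"
proof -
  obtain q where q: "x = y + int p * q"
    using assms(2) by (metis cong_iff_lin cong_sym)
  show ?thesis using q ep_add ep_mult_p[OF assms(1)] by simp
qed

lemma ep_cong_nat: assumes "p > 0" "[a = b] (mod p)" shows "ep p (int a) = ep p (int b)"
  using assms by (intro ep_cong) (auto simp: cong_int_iff)

lemma norm_ep [simp]: "norm (ep p x) = 1"
  by (simp add: ep_def)

lemma cnj_ep: "cnj (ep p x) = ep p (- x)"
  by (simp add: ep_def cis_cnj)

lemma ep_pow: "ep p x ^ n = ep p (int n * x)"
  by (simp add: ep_def DeMoivre algebra_simps)

lemma ep_eq_1: assumes "p > 0" "ep p x = 1" shows "int p dvd x"
proof -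
  have "cis (2 * pi * of_int x / of_nat p) = cis 0" using assms by (simp add: ep_def)
  then have "sin (2 * pi * of_int x / of_nat p) = sin 0 \<and> cos (2 * pi * of_int x / of_nat p) = cos 0"
    by (metis cis.sel)
  then obtain n :: int where n: "2 * pi * of_int x / of_nat p = 0 + 2 * pi * n"
    using sin_cos_eq_iff by blast
  then have "of_int x = real p * of_int n" using assms(1) by (simp add: field_simps)
  then have "x = int p * n" by (metis of_int_eq_iff of_int_mult of_int_of_nat_eq)
  then show ?thesis by simp
qed

lemma sum_ep: assumes "p > 0"
  shows "(\<Sum>r<p. ep p (int r * x)) = (if int p dvd x then of_nat p else 0)"
proof (cases "int p dvd x")
  case True
  then have "ep p (int r * x) = 1" for r
    using ep_cong[OF assms, of "int r * x" 0] by (simp add: cong_0_iff)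
  then show ?thesis using True by simp
next
  case False
  define w where "w = ep p x"
  have w1: "w \<noteq> 1" using ep_eq_1[OF assms, of x] False w_def by auto
  have wp: "w ^ p = 1" using ep_pow[of p x p] ep_mult_p[OF assms, of x] w_def by simp
  have "(\<Sum>r<p. ep p (int r * x)) = (\<Sum>r<p. w ^ r)" by (simp add: w_def ep_pow)
  also have "\<dots> = 0" using w1 wp by (simp add: sum_gp_strict)
  finally show ?thesis using False by simp
qed



definition FI :: "nat \<Rightarrow> nat set \<Rightarrow> nat \<Rightarrow> complex" where
  "FI p A r = (\<Sum>y\<in>A. ep p (- (int r * int y)))"

definition SS :: "nat \<Rightarrow> (nat \<Rightarrow> nat) \<Rightarrow> nat \<Rightarrow> nat \<Rightarrow> complex" where
  "SS p \<sigma> r s = (\<Sum>x<p. ep p (int r * int x + int s * int (\<sigma> x)))"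

lemma swap_in: "(\<Sum>a\<in>A. \<Sum>b\<in>B. \<Sum>c\<in>C. f a b c) = (\<Sum>c\<in>C. \<Sum>a\<in>A. \<Sum>b\<in>B. f a b c)"
proof -
  have "(\<Sum>a\<in>A. \<Sum>b\<in>B. \<Sum>c\<in>C. f a b c) = (\<Sum>a\<in>A. \<Sum>c\<in>C. \<Sum>b\<in>B. f a b c)"
    by (rule sum.cong[OF refl], rule sum.swap)
  also have "\<dots> = (\<Sum>c\<in>C. \<Sum>a\<in>A. \<Sum>b\<in>B. f a b c)" by (rule sum.swap)
  finally show ?thesis .
qed

lemma sum_ep_nat_diff: assumes "p > 0" "x < p" "y < p"
  shows "(\<Sum>r<p. ep p (int r * (int x - int y))) = (if x = y then of_nat p else 0)"
proof -
  have "int p dvd (int x - int y) \<longleftrightarrow> x = y"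
  proof
    assume "int p dvd (int x - int y)"
    then have "[int x = int y] (mod int p)" by (simp add: cong_iff_dvd_diff)
    then have "[x = y] (mod p)" by (simp add: cong_int_iff)
    then show "x = y" using assms by (simp add: cong_def)
  qed simp
  then show ?thesis using sum_ep[OF assms(1)] by simp
qed

lemma fourier_count:
  assumes p: "p > 0" and I: "I \<subseteq> {..<p}" and J: "J \<subseteq> {..<p}" and sig: "\<And>x. x < p \<Longrightarrow> \<sigma> x < p"
  shows "(\<Sum>r<p. \<Sum>s<p. FI p I r * FI p J s * SS p \<sigma> r s) = of_nat p ^ 2 * of_nat (card {x\<in>I. \<sigma> x \<in> J})"
proof -
  have fI: "finite I" "finite J" using I J finite_subset by auto
  have inner: "(\<Sum>r<p. \<Sum>s<p. ep p (- (int r * int y)) * ep p (- (int s * int z)) * ep p (int r * int x + int s * int (\<sigma> x)))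
      = (if x = y then of_nat p else 0) * (if \<sigma> x = z then of_nat p else 0)"
    if "y \<in> I" "z \<in> J" "x < p" for y z x
  proof -
    have "ep p (- (int r * int y)) * ep p (- (int s * int z)) * ep p (int r * int x + int s * int (\<sigma> x))
        = ep p (int r * (int x - int y)) * ep p (int s * (int (\<sigma> x) - int z))" for r s
      by (simp add: ep_add[symmetric] algebra_simps)
    then have "(\<Sum>r<p. \<Sum>s<p. ep p (- (int r * int y)) * ep p (- (int s * int z)) * ep p (int r * int x + int s * int (\<sigma> x)))
        = (\<Sum>r<p. ep p (int r * (int x - int y))) * (\<Sum>s<p. ep p (int s * (int (\<sigma> x) - int z)))"
      by (simp add: sum_product)
    also have "\<dots> = (if x = y then of_nat p else 0) * (if \<sigma> x = z then of_nat p else 0)"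
      using sum_ep_nat_diff[OF p] that I J sig by auto
    finally show ?thesis .
  qed
  have "(\<Sum>r<p. \<Sum>s<p. FI p I r * FI p J s * SS p \<sigma> r s)
     = (\<Sum>r<p. \<Sum>s<p. \<Sum>x<p. \<Sum>z\<in>J. \<Sum>y\<in>I. ep p (- (int r * int y)) * (ep p (- (int s * int z)) * ep p (int r * int x + int s * int (\<sigma> x))))"
    unfolding FI_def SS_def by (simp add: sum_distrib_left sum_distrib_right mult.assoc)
  also have "\<dots> = (\<Sum>x<p. \<Sum>r<p. \<Sum>s<p. \<Sum>z\<in>J. \<Sum>y\<in>I. ep p (- (int r * int y)) * (ep p (- (int s * int z)) * ep p (int r * int x + int s * int (\<sigma> x))))"
    by (rule swap_in)
  also have "\<dots> = (\<Sum>x<p. \<Sum>z\<in>J. \<Sum>r<p. \<Sum>s<p. \<Sum>y\<in>I. ep p (- (int r * int y)) * (ep p (- (int s * int z)) * ep p (int r * int x + int s * int (\<sigma> x))))"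
    by (rule sum.cong[OF refl], rule swap_in)
  also have "\<dots> = (\<Sum>x<p. \<Sum>z\<in>J. \<Sum>y\<in>I. \<Sum>r<p. \<Sum>s<p. ep p (- (int r * int y)) * (ep p (- (int s * int z)) * ep p (int r * int x + int s * int (\<sigma> x))))"
    by (rule sum.cong[OF refl], rule sum.cong[OF refl], rule swap_in)
  also have "\<dots> = (\<Sum>x<p. \<Sum>z\<in>J. \<Sum>y\<in>I. (if x = y then of_nat p else 0) * (if \<sigma> x = z then of_nat p else 0))"
    using inner by (simp add: mult.assoc)
  also have "\<dots> = (\<Sum>x<p. if x \<in> I \<and> \<sigma> x \<in> J then of_nat p ^ 2 else 0)"
  proof (rule sum.cong[OF refl])
    fix x assume "x \<in> {..<p}"
    show "(\<Sum>z\<in>J. \<Sum>y\<in>I. (if x = y then of_nat p else 0) * (if \<sigma> x = z then of_nat p else 0)) = (if x \<in> I \<and> \<sigma> x \<in> J then of_nat p ^ 2 else (0::complex))"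
    proof -
      have e1: "(\<Sum>y\<in>I. (if x = y then of_nat p else 0) * c) = (if x \<in> I then of_nat p * c else (0::complex))" for c
      proof -
        have "(\<Sum>y\<in>I. (if x = y then of_nat p else 0) * c) = (\<Sum>y\<in>I. if x = y then of_nat p * c else (0::complex))"
          by (rule sum.cong) auto
        then show ?thesis using fI by (simp add: sum.delta')
      qed
      have e2: "(\<Sum>z\<in>J. of_nat p * (if \<sigma> x = z then of_nat p else 0)) = (if \<sigma> x \<in> J then of_nat p * of_nat p else (0::complex))"
      proof -
        have "(\<Sum>z\<in>J. of_nat p * (if \<sigma> x = z then of_nat p else 0)) = (\<Sum>z\<in>J. if \<sigma> x = z then of_nat p * of_nat p else (0::complex))"
          by (rule sum.cong) auto
        then show ?thesis using fI by (simp add: sum.delta')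
      qed
      have "(\<Sum>z\<in>J. \<Sum>y\<in>I. (if x = y then of_nat p else 0) * (if \<sigma> x = z then of_nat p else 0))
          = (\<Sum>z\<in>J. (if x \<in> I then of_nat p * (if \<sigma> x = z then of_nat p else 0) else (0::complex)))"
        by (rule sum.cong[OF refl], rule e1)
      also have "\<dots> = (if x \<in> I \<and> \<sigma> x \<in> J then of_nat p * of_nat p else 0)"
        using e2 by (cases "x \<in> I") auto
      finally show ?thesis by (simp add: power2_eq_square)
    qed
  qed
  also have "\<dots> = of_nat p ^ 2 * of_nat (card {x\<in>{..<p}. x \<in> I \<and> \<sigma> x \<in> J})"
    by (simp add: sum.inter_filter[symmetric])
  also have "{x\<in>{..<p}. x \<in> I \<and> \<sigma> x \<in> J} = {x\<in>I. \<sigma> x \<in> J}" using I by auto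
  finally show ?thesis .
qed



lemma sum_ep_int: assumes "p > 0"
  shows "(\<Sum>r<p. ep p (int r * x)) = (if [x = 0] (mod int p) then of_nat p else 0)"
  using sum_ep[OF assms] by (simp add: cong_0_iff)

lemma parseval:
  fixes \<alpha> \<beta> :: "'a \<Rightarrow> int"
  assumes p: "p > 0" and X: "finite X"
  shows "(\<Sum>r<p. \<Sum>s<p. (norm (\<Sum>x\<in>X. ep p (int r * \<alpha> x + int s * \<beta> x)))^2)
     = real p ^ 2 * real (card {z \<in> X \<times> X. [\<alpha> (fst z) = \<alpha> (snd z)] (mod int p) \<and> [\<beta> (fst z) = \<beta> (snd z)] (mod int p)})"
proof -
  let ?F = "\<lambda>r s. (\<Sum>x\<in>X. ep p (int r * \<alpha> x + int s * \<beta> x))"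
  let ?T = "\<lambda>x y r s. ep p (int r * (\<alpha> x - \<alpha> y)) * ep p (int s * (\<beta> x - \<beta> y))"
  have sq: "complex_of_real ((norm (?F r s))^2) = (\<Sum>x\<in>X. \<Sum>y\<in>X. ?T x y r s)" for r s
  proof -
    have "complex_of_real ((norm (?F r s))^2) = ?F r s * cnj (?F r s)" by (rule complex_norm_square)
    also have "\<dots> = (\<Sum>x\<in>X. \<Sum>y\<in>X. ep p (int r * \<alpha> x + int s * \<beta> x) * ep p (- (int r * \<alpha> y + int s * \<beta> y)))"
      by (simp add: cnj_sum cnj_ep sum_product)
    also have "\<dots> = (\<Sum>x\<in>X. \<Sum>y\<in>X. ?T x y r s)"
      by (intro sum.cong refl) (simp add: ep_add[symmetric] algebra_simps)
    finally show ?thesis .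
  qed
  have inner: "(\<Sum>r<p. \<Sum>s<p. ?T x y r s) = (if [\<alpha> x = \<alpha> y] (mod int p) \<and> [\<beta> x = \<beta> y] (mod int p) then of_nat p ^ 2 else 0)" for x y
  proof -
    have "(\<Sum>r<p. \<Sum>s<p. ?T x y r s) = (\<Sum>r<p. ep p (int r * (\<alpha> x - \<alpha> y))) * (\<Sum>s<p. ep p (int s * (\<beta> x - \<beta> y)))"
      by (simp add: sum_product)
    also have "\<dots> = (if [\<alpha> x = \<alpha> y] (mod int p) \<and> [\<beta> x = \<beta> y] (mod int p) then of_nat p ^ 2 else 0)"
      by (simp add: sum_ep_int[OF p] cong_iff_dvd_diff cong_0_iff power2_eq_square)
    finally show ?thesis .
  qed
  have "complex_of_real (\<Sum>r<p. \<Sum>s<p. (norm (?F r s))^2) = (\<Sum>r<p. \<Sum>s<p. \<Sum>x\<in>X. \<Sum>y\<in>X. ?T x y r s)"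
    by (simp only: of_real_sum sq)
  also have "\<dots> = (\<Sum>x\<in>X. \<Sum>r<p. \<Sum>s<p. \<Sum>y\<in>X. ?T x y r s)" by (rule swap_in)
  also have "\<dots> = (\<Sum>x\<in>X. \<Sum>y\<in>X. \<Sum>r<p. \<Sum>s<p. ?T x y r s)" by (rule sum.cong[OF refl], rule swap_in)
  also have "\<dots> = (\<Sum>x\<in>X. \<Sum>y\<in>X. (if [\<alpha> x = \<alpha> y] (mod int p) \<and> [\<beta> x = \<beta> y] (mod int p) then of_nat p ^ 2 else 0))"
    by (simp add: inner)
  also have "\<dots> = (\<Sum>z\<in>X \<times> X. (if [\<alpha> (fst z) = \<alpha> (snd z)] (mod int p) \<and> [\<beta> (fst z) = \<beta> (snd z)] (mod int p) then of_nat p ^ 2 else 0))"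
    by (simp add: sum.cartesian_product case_prod_beta)
  also have "\<dots> = of_nat p ^ 2 * of_nat (card {z \<in> X \<times> X. [\<alpha> (fst z) = \<alpha> (snd z)] (mod int p) \<and> [\<beta> (fst z) = \<beta> (snd z)] (mod int p)})"
    using X by (simp add: sum.inter_filter[symmetric])
  also have "\<dots> = complex_of_real (real p ^ 2 * real (card {z \<in> X \<times> X. [\<alpha> (fst z) = \<alpha> (snd z)] (mod int p) \<and> [\<beta> (fst z) = \<beta> (snd z)] (mod int p)}))"
    by simp
  finally show ?thesis using of_real_eq_iff by blast
qed

lemma SS_sq: "SS p \<sigma> r s ^ 2 = (\<Sum>z\<in>{..<p} \<times> {..<p}. ep p (int r * (int (fst z) + int (snd z)) + int s * (int (\<sigma> (fst z)) + int (\<sigma> (snd z)))))"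
proof -
  have "SS p \<sigma> r s ^ 2 = (\<Sum>x<p. \<Sum>y<p. ep p (int r * int x + int s * int (\<sigma> x)) * ep p (int r * int y + int s * int (\<sigma> y)))"
    by (simp add: SS_def power2_eq_square sum_product)
  also have "\<dots> = (\<Sum>x<p. \<Sum>y<p. ep p (int r * (int x + int y) + int s * (int (\<sigma> x) + int (\<sigma> y))))"
    by (intro sum.cong refl) (simp add: ep_add[symmetric] algebra_simps)
  also have "\<dots> = (\<Sum>z\<in>{..<p} \<times> {..<p}. ep p (int r * (int (fst z) + int (snd z)) + int s * (int (\<sigma> (fst z)) + int (\<sigma> (snd z)))))"
    by (simp add: sum.cartesian_product case_prod_beta)
  finally show ?thesis .
qed

definition NN :: "nat \<Rightarrow> (nat \<Rightarrow> nat) \<Rightarrow> nat" where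
  "NN p \<sigma> = card {z \<in> ({..<p} \<times> {..<p}) \<times> ({..<p} \<times> {..<p}).
      [int (fst (fst z)) + int (snd (fst z)) = int (fst (snd z)) + int (snd (snd z))] (mod int p) \<and>
      [int (\<sigma> (fst (fst z))) + int (\<sigma> (snd (fst z))) = int (\<sigma> (fst (snd z))) + int (\<sigma> (snd (snd z)))] (mod int p)}"

lemma fourth_moment: assumes p: "p > 0"
  shows "(\<Sum>r<p. \<Sum>s<p. (norm (SS p \<sigma> r s))^4) = real p ^ 2 * real (NN p \<sigma>)"
proof -
  have "(norm (SS p \<sigma> r s))^4 = (norm (SS p \<sigma> r s ^ 2))^2" for r s
    by (simp add: norm_power power_mult[symmetric])
  then have "(\<Sum>r<p. \<Sum>s<p. (norm (SS p \<sigma> r s))^4) = (\<Sum>r<p. \<Sum>s<p. (norm (\<Sum>z\<in>{..<p} \<times> {..<p}. ep p (int r * (int (fst z) + int (snd z)) + int s * (int (\<sigma> (fst z)) + int (\<sigma> (snd z))))))^2)"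
    by (simp add: SS_sq)
  also have "\<dots> = real p ^ 2 * real (NN p \<sigma>)"
    unfolding NN_def by (rule parseval[OF p]) simp
  finally show ?thesis .
qed



lemma lagrange_roots:
  fixes f :: "int poly"
  assumes p: "prime p" and nz: "\<exists>i. \<not> int p dvd coeff f i"
  shows "card {x\<in>{..<p}. int p dvd poly f (int x)} \<le> degree f"
  using nz
proof (induction "degree f" arbitrary: f rule: less_induct)
  case less
  show ?case
  proof (cases "{x\<in>{..<p}. int p dvd poly f (int x)} = {}")
    case True then show ?thesis by (metis card.empty le0)
  next
    case False
    then obtain r where r: "r < p" "int p dvd poly f (int r)" by auto
    have degpos: "degree f > 0"
    proof (rule ccontr)
      assume "\<not> degree f > 0"
      then have "degree f = 0" by simp
      then have "f = [:coeff f 0:]" by (metis degree_0_id)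
      then have "poly f (int r) = coeff f 0" "\<And>i. i > 0 \<Longrightarrow> coeff f i = 0"
        by (metis poly_pCons poly_0 mult_zero_right add_0_right, metis coeff_pCons_Suc coeff_0 gr0_conv_Suc)
      then show False using less.prems r(2)
        by (metis dvd_0_right neq0_conv)
    qed
    define g where "g = synthetic_div f (int r)"
    have fg: "f = [:- int r, 1:] * g + [:poly f (int r):]"
      unfolding g_def by (rule synthetic_div_correct'[symmetric])
    have degg: "degree g < degree f" using degpos by (simp add: g_def degree_synthetic_div)
    have gnz: "\<exists>i. \<not> int p dvd coeff g i"
    proof (rule ccontr)
      assume "\<not> (\<exists>i. \<not> int p dvd coeff g i)"
      then have all: "\<And>i. int p dvd coeff g i" by blast
      have "int p dvd coeff f i" for i
      proof -
        have c: "coeff f i = coeff ([:- int r, 1:] * g) i + coeff [:poly f (int r):] i"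
          using fg by (metis coeff_add)
        have c1: "int p dvd coeff ([:- int r, 1:] * g) i"
        proof (cases i)
          case 0 then show ?thesis using all by simp
        next
          case (Suc j) then show ?thesis using all by simp
        qed
        have c2: "int p dvd coeff [:poly f (int r):] i"
          using r(2) by (cases i) auto
        show ?thesis using c c1 c2 by simp
      qed
      then show False using less.prems by blast
    qed
    have IH: "card {x\<in>{..<p}. int p dvd poly g (int x)} \<le> degree g"
      using less.hyps[OF degg gnz] .
    have sub: "{x\<in>{..<p}. int p dvd poly f (int x)} \<subseteq> insert r {x\<in>{..<p}. int p dvd poly g (int x)}"
    proof
      fix x assume x: "x \<in> {x\<in>{..<p}. int p dvd poly f (int x)}"
      have "poly f (int x) = (int x - int r) * poly g (int x) + poly f (int r)"
        by (subst fg) (simp add: algebra_simps)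
      then have "int p dvd (int x - int r) * poly g (int x)"
        using x r(2) by (metis (no_types, lifting) dvd_add_left_iff mem_Collect_eq)
      then have "int p dvd (int x - int r) \<or> int p dvd poly g (int x)"
        using p by (simp add: prime_dvd_mult_iff)
      moreover have "int p dvd (int x - int r) \<Longrightarrow> x = r"
      proof -
        assume "int p dvd (int x - int r)"
        then have "[int x = int r] (mod int p)" by (simp add: cong_iff_dvd_diff)
        then have "[x = r] (mod p)" by (simp add: cong_int_iff)
        then show "x = r" using x r(1) by (simp add: cong_def)
      qed
      ultimately show "x \<in> insert r {x\<in>{..<p}. int p dvd poly g (int x)}" using x by auto
    qed
    have "card {x\<in>{..<p}. int p dvd poly f (int x)} \<le> card (insert r {x\<in>{..<p}. int p dvd poly g (int x)})"
      by (rule card_mono[OF _ sub]) simp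
    also have "\<dots> \<le> Suc (card {x\<in>{..<p}. int p dvd poly g (int x)})" by (simp add: card_insert_if)
    also have "\<dots> \<le> degree f" using IH degg by simp
    finally show ?thesis .
  qed
qed

lemma coeff_lin_Suc: "coeff ([:c, d:] * q) (Suc j) = c * coeff q (Suc j) + d * coeff q j"
  by simp

lemma degree_lin_pow: "degree ([:c, d:] ^ n) \<le> n"
  by (rule order.trans[OF degree_power_le]) simp

lemma coeff_lin_pow_top: "coeff ([:c, (-1::int):] ^ n) n = (-1) ^ n"
proof (induction n)
  case 0 then show ?case by simp
next
  case (Suc n)
  have "coeff ([:c, -1:] ^ n) (Suc n) = 0"
    using degree_lin_pow[of c "-1" n] by (simp add: coeff_eq_0)
  then show ?case using Suc by (simp only: power_Suc coeff_lin_Suc)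
qed

lemma coeff_lin_pow_sub: "coeff ([:c, (-1::int):] ^ Suc n) n = int (Suc n) * c * (-1) ^ n"
proof (induction n)
  case 0 then show ?case by simp
next
  case (Suc n)
  have "coeff ([:c, -1:] ^ Suc (Suc n)) (Suc n) = c * coeff ([:c, -1:] ^ Suc n) (Suc n) + (-1) * coeff ([:c, -1:] ^ Suc n) n"
    by (simp only: power_Suc[of _ "Suc n"] coeff_lin_Suc)
  also have "\<dots> = c * (-1) ^ Suc n + (-1) * (int (Suc n) * c * (-1) ^ n)"
    by (simp only: Suc.IH coeff_lin_pow_top)
  also have "\<dots> = int (Suc (Suc n)) * c * (-1) ^ Suc n" by (simp add: algebra_simps)
  finally show ?case .
qed



lemma pow_inverse_exp:
  assumes p: "prime p" and cop: "gcd k (p - 1) = 1" and p3: "p \<ge> 3"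
  obtains k' where "\<And>x. [x ^ (k * k') = x] (mod p)"
proof -
  have p1: "p - 1 > 1" using p3 by simp
  show ?thesis
  proof -
    have "coprime k (p - 1)" using cop by (metis coprime_iff_gcd_eq_1)
    then obtain k' where kk: "[k * k' = Suc 0] (mod (p - 1))" using cong_solve_coprime_nat by blast
    then have "(k * k') mod (p - 1) = 1" using p1 unfolding cong_def by simp
    define j where "j = (k * k') div (p - 1)"
    have kk2: "k * k' = (p - 1) * j + 1"
      unfolding j_def using \<open>(k * k') mod (p - 1) = 1\<close> div_mult_mod_eq[of "k * k'" "p - 1"]
      by (simp add: mult.commute)
    have "[x ^ (k * k') = x] (mod p)" for x
    proof (cases "p dvd x")
      case True
      have "k * k' > 0" using kk2 by simp
      then have "x dvd x ^ (k * k')" by (simp add: dvd_power)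
      then have "p dvd x ^ (k * k')" using True by (rule dvd_trans[rotated])
      then show ?thesis using True by (simp add: cong_def dvd_imp_mod_0)
    next
      case False
      have f: "[x ^ (p - 1) = 1] (mod p)" by (rule fermat_theorem[OF p False])
      have "x ^ (k * k') = (x ^ (p - 1)) ^ j * x"
        unfolding kk2 by (simp add: power_mult power_add)
      also have "[\<dots> = 1 ^ j * x] (mod p)"
        by (intro cong_mult cong_pow f cong_refl)
      finally show ?thesis by simp
    qed
    then show ?thesis using that by blast
  qed
qed

locale etactx =
  fixes p a k :: nat
  assumes p_prime: "prime p"
    and a_pos: "0 < a" and a_lt: "a < p"
    and k_ge: "2 \<le> k" and k_le: "k \<le> p - 2"
    and k_cop: "gcd k (p - 1) = 1"
begin

lemma p_pos: "p > 0" using prime_gt_1_nat[OF p_prime] by simp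

lemma p_ge5: "p \<ge> 4" using k_ge k_le by simp

lemma a_cop: "coprime a p"
proof -
  have "\<not> p dvd a" using a_pos a_lt by (auto dest: dvd_imp_le)
  then show ?thesis using prime_imp_coprime[OF p_prime] by (simp add: coprime_commute)
qed

abbreviation "\<sigma> \<equiv> eta p a k"

lemma sig_lt: "\<sigma> x < p" using p_pos by (simp add: eta_def)

lemma pow_inj: assumes "[x ^ k = y ^ k] (mod p)" shows "[x = y] (mod p)"
proof -
  have p3: "p \<ge> 3" using p_ge5 by simp
  obtain k' where kk: "\<And>x. [x ^ (k * k') = x] (mod p)"
    using pow_inverse_exp[OF p_prime k_cop p3] by blast
  have "[x ^ (k * k') = y ^ (k * k')] (mod p)"
    using cong_pow[OF assms, of k'] by (simp add: power_mult)
  then show ?thesis using kk by (meson cong_sym cong_trans)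
qed

lemma sig_inj: "inj_on \<sigma> {..<p}"
proof
  fix x y assume xy: "x \<in> {..<p}" "y \<in> {..<p}" "\<sigma> x = \<sigma> y"
  then have "[a * x ^ k = a * y ^ k] (mod p)" by (simp add: eta_def cong_def)
  then have "[x ^ k = y ^ k] (mod p)" using a_cop by (simp add: cong_mult_lcancel_nat)
  then have "[x = y] (mod p)" by (rule pow_inj)
  then show "x = y" using xy by (simp add: cong_def)
qed

lemma sig_image: "\<sigma> ` {..<p} = {..<p}"
  by (rule endo_inj_surj) (auto simp: sig_lt sig_inj)

lemma sig_bij: "bij_betw \<sigma> {..<p} {..<p}"
  using sig_inj sig_image by (simp add: bij_betw_def)

lemma sig_int_cong: "[int (\<sigma> x) = int a * int x ^ k] (mod int p)"
  by (simp add: eta_def cong_int_iff[symmetric] of_nat_mod cong_def)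

end



context etactx
begin

lemma fst_inj_pairs:
  assumes "\<And>v v'. v \<in> B \<Longrightarrow> v' \<in> B \<Longrightarrow> [int (snd v) = int (snd v')] (mod int p) \<or> fst v \<noteq> fst v'"
    and "B \<subseteq> {..<p} \<times> {..<p}"
  shows "inj_on fst B"
proof
  fix v v' assume v: "v \<in> B" "v' \<in> B" "fst v = fst v'"
  then have "[int (snd v) = int (snd v')] (mod int p)" using assms(1) by blast
  then have "[snd v = snd v'] (mod p)" by (simp add: cong_int_iff)
  moreover have "snd v < p" "snd v' < p" using v assms(2) by auto
  ultimately have "snd v = snd v'" by (simp add: cong_def)
  then show "v = v'" using v(3) by (simp add: prod_eq_iff)
qed

lemma minus_one_pow_ndvd: "\<not> int p dvd (-1) ^ n"
proof -
  have "(-1::int) ^ n = 1 \<or> (-1::int) ^ n = -1" by (cases "even n") simp_all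
  moreover have "\<not> int p dvd 1" using prime_gt_1_nat[OF p_prime] by simp
  ultimately show ?thesis by auto
qed

lemma fiber_bound:
  assumes u: "u \<in> {..<p} \<times> {..<p}"
  defines "B \<equiv> {v \<in> {..<p} \<times> {..<p}.
      [int (fst u) + int (snd u) = int (fst v) + int (snd v)] (mod int p) \<and>
      [int (\<sigma> (fst u)) + int (\<sigma> (snd u)) = int (\<sigma> (fst v)) + int (\<sigma> (snd v))] (mod int p)}"
  shows "card B \<le> k + (if int p dvd (int (fst u) + int (snd u)) then p else 0)"
proof -
  define c where "c = int (fst u) + int (snd u)"
  define d where "d = int (fst u) ^ k + int (snd u) ^ k"
  have injB: "inj_on fst B"
  proof (rule fst_inj_pairs)
    fix v v' assume "v \<in> B" "v' \<in> B"
    then have h1: "[int (fst u) + int (snd u) = int (fst v) + int (snd v)] (mod int p)"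
      and h2: "[int (fst u) + int (snd u) = int (fst v') + int (snd v')] (mod int p)"
      unfolding B_def by simp_all
    then have "[int (fst v) + int (snd v) = int (fst v') + int (snd v')] (mod int p)"
      using cong_trans[OF cong_sym[OF h1] h2] by simp
    then show "[int (snd v) = int (snd v')] (mod int p) \<or> fst v \<noteq> fst v'"
      by (metis cong_add_lcancel)
  qed (auto simp: B_def)
  have cardB: "card B = card (fst ` B)" using injB by (simp add: card_image)
  have "fst ` B \<subseteq> {..<p}" by (auto simp: B_def)
  then have b1: "card B \<le> p" using cardB card_mono[OF finite_lessThan, of "fst ` B" p] by simp
  show ?thesis
  proof (cases "int p dvd c")
    case True then show ?thesis using b1 by (simp add: c_def)
  next
    case False
    define f :: "int poly" where "f = monom 1 k + [:c, -1:] ^ k - [:d:]"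
    have polyf: "poly f x = x ^ k + (c - x) ^ k - d" for x
      by (simp add: f_def poly_monom)
    have degf: "degree f \<le> k"
      unfolding f_def
      by (intro degree_diff_le degree_add_le degree_lin_pow) (auto simp: degree_monom_le)
    have k1: "k = Suc (k - 1)" "k - 1 \<noteq> 0" using k_ge by auto
    have cf: "coeff f (k - 1) = int k * c * (-1) ^ (k - 1)"
    proof -
      have "coeff ([:c, -1:] ^ k) (k - 1) = int k * c * (-1) ^ (k - 1)"
        using coeff_lin_pow_sub[of c "k - 1"] k1(1) by simp
      moreover have "coeff [:d:] (k - 1) = 0" using k1(2) by (cases "k - 1") auto
      moreover have "coeff (monom (1::int) k) (k - 1) = 0" using k1(1) by (simp add: coeff_monom)
      ultimately show ?thesis by (simp add: f_def)
    qed
    have pk: "\<not> int p dvd int k"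
    proof
      assume "int p dvd int k"
      then have "p dvd k" by simp
      then show False using k_ge k_le by (auto dest: dvd_imp_le)
    qed
    have pp: "prime (int p)" using p_prime by simp
    have nz1: "\<not> int p dvd int k * c" using prime_dvd_mult_iff[OF pp] pk False by blast
    have nz: "\<not> int p dvd coeff f (k - 1)"
      unfolding cf using prime_dvd_mult_iff[OF pp] nz1 minus_one_pow_ndvd by blast
    have sub: "fst ` B \<subseteq> {x\<in>{..<p}. int p dvd poly f (int x)}"
    proof
      fix x assume "x \<in> fst ` B"
      then obtain y where xy: "(x, y) \<in> B" by auto
      then have x: "x < p" and c1: "[c = int x + int y] (mod int p)"
        and c2: "[int (\<sigma> (fst u)) + int (\<sigma> (snd u)) = int (\<sigma> x) + int (\<sigma> y)] (mod int p)"
        by (auto simp: B_def c_def)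
      have yc: "[int y = c - int x] (mod int p)"
      proof -
        have "[c - int x = int x + int y - int x] (mod int p)" by (rule cong_diff[OF c1 cong_refl])
        then show ?thesis by (simp add: cong_sym_eq)
      qed
      have "[int a * int (fst u) ^ k + int a * int (snd u) ^ k = int (\<sigma> (fst u)) + int (\<sigma> (snd u))] (mod int p)"
        by (intro cong_add; rule cong_sym, rule sig_int_cong)
      also note c2
      also have "[int (\<sigma> x) + int (\<sigma> y) = int a * int x ^ k + int a * int y ^ k] (mod int p)"
        by (intro cong_add sig_int_cong)
      also have "[int a * int x ^ k + int a * int y ^ k = int a * int x ^ k + int a * (c - int x) ^ k] (mod int p)"
        by (intro cong_add cong_refl cong_mult cong_pow yc)
      finally have "[int a * d = int a * (int x ^ k + (c - int x) ^ k)] (mod int p)"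
        by (simp add: d_def algebra_simps)
      moreover have "coprime (int a) (int p)" using a_cop by simp
      ultimately have "[d = int x ^ k + (c - int x) ^ k] (mod int p)"
        using cong_mult_lcancel by blast
      then have "int p dvd poly f (int x)"
        by (simp add: polyf cong_iff_dvd_diff dvd_diff_commute)
      then show "x \<in> {x\<in>{..<p}. int p dvd poly f (int x)}" using x by simp
    qed
    have "card B \<le> card {x\<in>{..<p}. int p dvd poly f (int x)}"
      using cardB sub by (simp add: card_mono)
    also have "\<dots> \<le> degree f" using lagrange_roots[OF p_prime] nz by blast
    finally show ?thesis using degf False by (simp add: c_def)
  qed
qed

lemma NN_bound: "real (NN p \<sigma>) \<le> real (k + 1) * real p ^ 2"
proof -
  let ?P = "{..<p} \<times> {..<p}"
  let ?Q = "\<lambda>u v. [int (fst u) + int (snd u) = int (fst v) + int (snd v)] (mod int p) \<and>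
      [int (\<sigma> (fst u)) + int (\<sigma> (snd u)) = int (\<sigma> (fst v)) + int (\<sigma> (snd v))] (mod int p)"
  have eq: "{z \<in> ?P \<times> ?P. ?Q (fst z) (snd z)} = Sigma ?P (\<lambda>u. {v \<in> ?P. ?Q u v})" by auto
  have "NN p \<sigma> = card (Sigma ?P (\<lambda>u. {v \<in> ?P. ?Q u v}))" unfolding NN_def eq[symmetric] by simp
  also have "\<dots> = (\<Sum>u\<in>?P. card {v \<in> ?P. ?Q u v})" by (rule card_SigmaI) auto
  also have "\<dots> \<le> (\<Sum>u\<in>?P. k + (if int p dvd (int (fst u) + int (snd u)) then p else 0))"
    by (intro sum_mono fiber_bound)
  also have "\<dots> = card ?P * k + p * card {u \<in> ?P. int p dvd (int (fst u) + int (snd u))}"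
    by (simp add: sum.distrib sum.inter_filter[symmetric])
  also have "card {u \<in> ?P. int p dvd (int (fst u) + int (snd u))} \<le> p"
  proof -
    let ?C = "{u \<in> ?P. int p dvd (int (fst u) + int (snd u))}"
    have "inj_on fst ?C"
    proof (rule fst_inj_pairs)
      fix v v' assume "v \<in> ?C" "v' \<in> ?C"
      then have "[int (fst v) + int (snd v) = int (fst v') + int (snd v')] (mod int p)"
        by (simp add: cong_iff_dvd_diff)
      then show "[int (snd v) = int (snd v')] (mod int p) \<or> fst v \<noteq> fst v'"
        by (metis cong_add_lcancel)
    qed auto
    then have "card ?C = card (fst ` ?C)" by (simp add: card_image)
    also have "\<dots> \<le> card {..<p}" by (rule card_mono) auto
    finally show ?thesis by simp
  qed
  then have "card ?P * k + p * card {u \<in> ?P. int p dvd (int (fst u) + int (snd u))} \<le> card ?P * k + p * p"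
    by simp
  finally have "NN p \<sigma> \<le> p * p * k + p * p" by (simp add: card_cartesian_product)
  then have "real (NN p \<sigma>) \<le> real (p * p * k + p * p)" by linarith
  then show ?thesis by (simp add: power2_eq_square algebra_simps)
qed

end



context etactx
begin

lemma SS_nat: "SS p \<sigma> r s = (\<Sum>x<p. ep p (int (r * x + s * \<sigma> x)))"
  by (simp add: SS_def)

lemma SS_s0: assumes "0 < r" "r < p" shows "SS p \<sigma> r 0 = 0"
proof -
  have "\<not> int p dvd int r" using assms by (auto dest: dvd_imp_le)
  then have "(\<Sum>x<p. ep p (int x * int r)) = 0" using sum_ep[OF p_pos, of "int r"] by simp
  then show ?thesis by (simp add: SS_def mult.commute)
qed

lemma SS_r0: assumes "0 < s" "s < p" shows "SS p \<sigma> 0 s = 0"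
proof -
  have "\<not> int p dvd int s" using assms by (auto dest: dvd_imp_le)
  then have z: "(\<Sum>y<p. ep p (int y * int s)) = 0" using sum_ep[OF p_pos, of "int s"] by simp
  have "SS p \<sigma> 0 s = (\<Sum>x<p. (\<lambda>y. ep p (int y * int s)) (\<sigma> x))" by (simp add: SS_def mult.commute)
  also have "\<dots> = (\<Sum>y<p. ep p (int y * int s))" by (rule sum.reindex_bij_betw[OF sig_bij])
  finally show ?thesis using z by simp
qed

lemma mult_bij: assumes "0 < t" "t < p" shows "bij_betw (\<lambda>x. (t * x) mod p) {..<p} {..<p}"
proof -
  have cop: "coprime t p"
  proof -
    have "\<not> p dvd t" using assms by (auto dest: dvd_imp_le)
    then show ?thesis using prime_imp_coprime[OF p_prime] coprime_commute by blast
  qed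
  have inj: "inj_on (\<lambda>x. (t * x) mod p) {..<p}"
  proof
    fix x y assume xy: "x \<in> {..<p}" "y \<in> {..<p}" "(t * x) mod p = (t * y) mod p"
    then have "[t * x = t * y] (mod p)" by (simp add: cong_def)
    then have "[x = y] (mod p)" using cop by (simp add: cong_mult_lcancel_nat)
    then show "x = y" using xy by (simp add: cong_def)
  qed
  have "(\<lambda>x. (t * x) mod p) ` {..<p} = {..<p}"
    by (rule endo_inj_surj) (use inj p_pos in auto)
  then show ?thesis using inj by (simp add: bij_betw_def)
qed

lemma SS_dilate: assumes "0 < t" "t < p"
  shows "SS p \<sigma> ((r * t) mod p) ((s * t ^ k) mod p) = SS p \<sigma> r s"
proof -
  have "SS p \<sigma> r s = (\<Sum>x<p. (\<lambda>y. ep p (int (r * y + s * \<sigma> y))) ((t * x) mod p))"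
    unfolding SS_nat by (rule sum.reindex_bij_betw[OF mult_bij[OF assms], symmetric])
  also have "\<dots> = (\<Sum>x<p. ep p (int ((r * t) mod p * x + (s * t ^ k) mod p * \<sigma> x)))"
  proof (rule sum.cong[OF refl])
    fix x
    have "[r * ((t * x) mod p) + s * \<sigma> ((t * x) mod p) = (r * t) mod p * x + (s * t ^ k) mod p * \<sigma> x] (mod p)"
    proof -
      have L: "[r * ((t * x) mod p) + s * (a * ((t * x) mod p) ^ k mod p) = r * (t * x) + s * (a * (t * x) ^ k)] (mod p)"
        by (intro cong_add cong_mult cong_refl) (simp_all add: cong_def mod_simps, metis mod_mult_right_eq power_mod)
      have R: "[(r * t) mod p * x + (s * t ^ k) mod p * (a * x ^ k mod p) = (r * t) * x + (s * t ^ k) * (a * x ^ k)] (mod p)"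
        by (intro cong_add cong_mult cong_refl) (simp_all add: cong_def mod_simps)
      have E: "r * (t * x) + s * (a * (t * x) ^ k) = (r * t) * x + (s * t ^ k) * (a * x ^ k)"
        by (simp add: power_mult_distrib algebra_simps)
      show ?thesis using cong_trans[OF L, of "(r * t) mod p * x + (s * t ^ k) mod p * (a * x ^ k mod p)"] R E
        by (simp add: eta_def cong_sym_eq)
    qed
    then show "ep p (int (r * ((t * x) mod p) + s * \<sigma> ((t * x) mod p))) = ep p (int ((r * t) mod p * x + (s * t ^ k) mod p * \<sigma> x))"
      by (rule ep_cong_nat[OF p_pos])
  qed
  also have "\<dots> = SS p \<sigma> ((r * t) mod p) ((s * t ^ k) mod p)" by (simp add: SS_nat)
  finally show ?thesis by simp
qed

lemma orbit_bound: assumes r: "0 < r" "r < p" and s: "0 < s" "s < p"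
  shows "real (p - 1) * (norm (SS p \<sigma> r s))^4 \<le> (\<Sum>r'<p. \<Sum>s'<p. (norm (SS p \<sigma> r' s'))^4)"
proof -
  define h where "h = (\<lambda>t. ((r * t) mod p, (s * t ^ k) mod p))"
  define g where "g = (\<lambda>z. (norm (SS p \<sigma> (fst z) (snd z)))^4)"
  have copr: "coprime r p"
  proof -
    have "\<not> p dvd r" using r by (auto dest: dvd_imp_le)
    then show ?thesis using prime_imp_coprime[OF p_prime] coprime_commute by blast
  qed
  have inj: "inj_on h {1..<p}"
  proof
    fix x y assume xy: "x \<in> {1..<p}" "y \<in> {1..<p}" "h x = h y"
    then have "[r * x = r * y] (mod p)" by (simp add: h_def cong_def)
    then have "[x = y] (mod p)" using copr by (simp add: cong_mult_lcancel_nat)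
    then show "x = y" using xy by (simp add: cong_def)
  qed
  have "real (p - 1) * (norm (SS p \<sigma> r s))^4 = (\<Sum>t\<in>{1..<p}. g (h t))"
    using SS_dilate by (simp add: g_def h_def)
  also have "\<dots> = (\<Sum>z\<in>h ` {1..<p}. g z)" using sum.reindex[OF inj, of g] by (simp add: comp_def)
  also have "\<dots> \<le> (\<Sum>z\<in>{..<p} \<times> {..<p}. g z)"
    by (rule sum_mono2) (auto simp: h_def g_def p_pos)
  also have "\<dots> = (\<Sum>r'<p. \<Sum>s'<p. (norm (SS p \<sigma> r' s'))^4)"
    by (simp add: sum.cartesian_product g_def case_prod_beta)
  finally show ?thesis .
qed

lemma SS_bound: assumes "r < p" "s < p" "(r, s) \<noteq> (0, 0)"
  shows "(norm (SS p \<sigma> r s))^4 \<le> 2 * real (k + 1) * real p ^ 3"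
proof (cases "r = 0 \<or> s = 0")
  case True
  then have "SS p \<sigma> r s = 0" using assms SS_s0 SS_r0 by auto
  then show ?thesis by simp
next
  case False
  have pp: "real p > 1" using prime_gt_1_nat[OF p_prime] by simp
  have "real (p - 1) * (norm (SS p \<sigma> r s))^4 \<le> real p ^ 2 * real (NN p \<sigma>)"
    using orbit_bound[of r s] assms False fourth_moment[OF p_pos, of \<sigma>] by simp
  also have "\<dots> \<le> real p ^ 2 * (real (k + 1) * real p ^ 2)"
    by (intro mult_left_mono NN_bound) simp
  also have "\<dots> \<le> real (p - 1) * (2 * real (k + 1) * real p ^ 3)"
  proof -
    have "real p \<le> 2 * real (p - 1)" using pp by (simp add: of_nat_diff)
    then have "real p * (real (k + 1) * real p ^ 3) \<le> 2 * real (p - 1) * (real (k + 1) * real p ^ 3)"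
      by (intro mult_right_mono) simp_all
    then show ?thesis by (simp add: power2_eq_square power3_eq_cube algebra_simps)
  qed
  finally show ?thesis using pp by (simp add: of_nat_diff)
qed

end



lemma sin_lower: fixes y :: real assumes "0 \<le> y" "y \<le> 2" shows "sin y \<ge> y / 3"
proof -
  have "\<bar>sin y - (\<Sum>m<3. sin_coeff m * y ^ m)\<bar> \<le> inverse (fact 3) * \<bar>y\<bar> ^ 3"
    by (rule Maclaurin_sin_bound)
  moreover have "(\<Sum>m<3. sin_coeff m * y ^ m) = y"
    by (simp add: numeral_3_eq_3 sin_coeff_def)
  ultimately have b: "\<bar>sin y - y\<bar> \<le> y ^ 3 / 6" using assms by (simp add: numeral_3_eq_3)
  then have "sin y \<ge> y - y ^ 3 / 6" by (simp only: abs_le_iff) linarith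
  moreover have "y ^ 3 / 6 \<le> y * (2 / 3)"
  proof -
    have "y ^ 2 \<le> 4" using assms by (metis power2_eq_square mult_mono' num_double numeral_times_numeral)
    then have "y * y ^ 2 \<le> y * 4" using assms by (intro mult_left_mono) auto
    then show ?thesis by (simp add: power3_eq_cube power2_eq_square)
  qed
  ultimately show ?thesis by simp
qed

lemma norm_1_minus_cis: "norm (1 - cis t) = 2 * \<bar>sin (t / 2)\<bar>"
proof -
  have "(norm (1 - cis t))^2 = (1 - cos t)^2 + (sin t)^2" by (simp add: cmod_power2)
  also have "\<dots> = 2 - 2 * cos t" by (simp add: power2_eq_square algebra_simps)
  also have "cos t = 1 - 2 * sin (t / 2) ^ 2" using cos_double_sin[of "t / 2"] by simp
  finally have h: "(norm (1 - cis t))^2 = (2 * \<bar>sin (t / 2)\<bar>)^2" by (simp add: power2_eq_square)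
  show ?thesis by (rule power2_eq_imp_eq[OF h]) simp_all
qed

lemma norm_1_minus_ep: assumes "0 < r" "r < p"
  shows "norm (1 - ep p (- int r)) \<ge> 2 * real (min r (p - r)) / (3 * real p) * 2"
proof -
  define m where "m = min r (p - r)"
  have pp: "real p > 0" using assms by simp
  have "norm (1 - ep p (- int r)) = 2 * \<bar>sin (- (pi * real r / real p))\<bar>"
    by (simp add: ep_def norm_1_minus_cis)
  also have "\<bar>sin (- (pi * real r / real p))\<bar> = sin (pi * real m / real p)"
  proof -
    have "\<bar>sin (- (pi * real r / real p))\<bar> = \<bar>sin (pi * real r / real p)\<bar>" by simp
    also have "sin (pi * real r / real p) = sin (pi * real m / real p)"
    proof (cases "r \<le> p - r")
      case True then show ?thesis by (simp add: m_def)
    next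
      case False
      then have m: "m = p - r" by (simp add: m_def)
      have "pi * real m / real p = pi - pi * real r / real p"
        using assms pp by (simp add: m of_nat_diff field_simps)
      then show ?thesis by simp
    qed
    also have "sin (pi * real m / real p) \<ge> 0"
      using assms pp by (intro sin_ge_zero) (auto simp: m_def field_simps)
    then have "\<bar>sin (pi * real m / real p)\<bar> = sin (pi * real m / real p)" by simp
    finally show ?thesis .
  qed
  finally have eq: "norm (1 - ep p (- int r)) = 2 * sin (pi * real m / real p)" .
  have y0: "0 \<le> pi * real m / real p" using pp by simp
  have "real m \<le> real p / 2" unfolding m_def by linarith
  then have "pi * real m / real p \<le> pi / 2" using pp by (simp add: field_simps)
  then have y2: "pi * real m / real p \<le> 2" using pi_less_4 by linarith
  have "sin (pi * real m / real p) \<ge> pi * real m / real p / 3" by (rule sin_lower[OF y0 y2])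
  moreover have "pi * real m / real p / 3 \<ge> 2 * real m / (3 * real p)"
  proof -
    have "2 * real m \<le> pi * real m" using pi_ge_two by (intro mult_right_mono) auto
    then show ?thesis using pp by (simp add: field_simps)
  qed
  ultimately show ?thesis using eq m_def by simp
qed

lemma geom_norm: fixes w :: complex assumes "norm w = 1" "w \<noteq> 1"
  shows "norm (\<Sum>i<L. w ^ i) \<le> 2 / norm (1 - w)"
proof -
  have "(\<Sum>i<L. w ^ i) = (1 - w ^ L) / (1 - w)" using assms by (simp add: sum_gp_strict)
  then have "norm (\<Sum>i<L. w ^ i) = norm (1 - w ^ L) / norm (1 - w)" by (simp add: norm_divide)
  also have "norm (1 - w ^ L) \<le> 2"
    using norm_triangle_ineq4[of 1 "w ^ L"] assms by (simp add: norm_power)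
  then have "norm (1 - w ^ L) / norm (1 - w) \<le> 2 / norm (1 - w)"
    by (simp add: divide_right_mono)
  finally show ?thesis .
qed

lemma interval_min: fixes s len p :: nat assumes "p > 0"
  shows "(\<lambda>i. (s + i) mod p) ` {..<len} = (\<lambda>i. (s + i) mod p) ` {..<min len p}"
proof
  show "(\<lambda>i. (s + i) mod p) ` {..<len} \<subseteq> (\<lambda>i. (s + i) mod p) ` {..<min len p}"
  proof
    fix y assume "y \<in> (\<lambda>i. (s + i) mod p) ` {..<len}"
    then obtain i where i: "i < len" "y = (s + i) mod p" by auto
    have "y = (s + i mod p) mod p" using i(2) mod_add_right_eq[of s i p] by simp
    moreover have "i mod p < min len p"
      using i assms by (cases "len \<le> p") (auto simp: min_def)
    ultimately show "y \<in> (\<lambda>i. (s + i) mod p) ` {..<min len p}" by blast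
  qed
next
  show "(\<lambda>i. (s + i) mod p) ` {..<min len p} \<subseteq> (\<lambda>i. (s + i) mod p) ` {..<len}"
    by (intro image_mono) auto
qed

lemma FI_interval_bound:
  assumes p: "p > 0" and L: "L \<le> p" and r: "0 < r" "r < p"
  shows "norm (FI p ((\<lambda>i. (s + i) mod p) ` {..<L}) r) \<le> 3 * real p / real r + 3 * real p / real (p - r)"
proof -
  have inj: "inj_on (\<lambda>i. (s + i) mod p) {..<L}"
  proof
    fix i j assume ij: "i \<in> {..<L}" "j \<in> {..<L}" "(s + i) mod p = (s + j) mod p"
    then have "[s + i = s + j] (mod p)" by (simp add: cong_def)
    then have "[i = j] (mod p)" by (simp add: cong_add_lcancel_nat)
    then show "i = j" using ij L by (simp add: cong_def)
  qed
  define w where "w = ep p (- int r)"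
  have "FI p ((\<lambda>i. (s + i) mod p) ` {..<L}) r = (\<Sum>i<L. ep p (- (int r * int ((s + i) mod p))))"
    unfolding FI_def by (simp add: sum.reindex[OF inj])
  also have "\<dots> = (\<Sum>i<L. ep p (- (int r * int s)) * w ^ i)"
  proof (rule sum.cong[OF refl])
    fix i
    have "ep p (- (int r * int ((s + i) mod p))) = ep p (- (int r * int (s + i)))"
    proof (rule ep_cong[OF p])
      have c: "[int ((s + i) mod p) = int (s + i)] (mod int p)" by (subst cong_int_iff) (simp add: cong_def)
      have "[(- int r) * int ((s + i) mod p) = (- int r) * int (s + i)] (mod int p)"
        by (rule cong_mult[OF cong_refl c])
      then show "[- (int r * int ((s + i) mod p)) = - (int r * int (s + i))] (mod int p)" by simp
    qed
    also have "\<dots> = ep p (- (int r * int s)) * w ^ i"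
      by (simp add: w_def ep_pow ep_add[symmetric] algebra_simps)
    finally show "ep p (- (int r * int ((s + i) mod p))) = ep p (- (int r * int s)) * w ^ i" .
  qed
  also have "\<dots> = ep p (- (int r * int s)) * (\<Sum>i<L. w ^ i)" by (simp add: sum_distrib_left)
  finally have "norm (FI p ((\<lambda>i. (s + i) mod p) ` {..<L}) r) = norm (\<Sum>i<L. w ^ i)"
    by (simp add: norm_mult)
  also have "\<dots> \<le> 2 / norm (1 - w)"
  proof (rule geom_norm)
    show "norm w = 1" by (simp add: w_def)
    show "w \<noteq> 1"
    proof
      assume "w = 1"
      then have "int p dvd - int r" using ep_eq_1[OF p, of "- int r"] w_def by simp
      then have "p dvd r" by simp
      then show False using r by (auto dest: dvd_imp_le)
    qed
  qed
  also have "\<dots> \<le> 2 / (2 * real (min r (p - r)) / (3 * real p) * 2)"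
  proof (rule divide_left_mono)
    show "2 * real (min r (p - r)) / (3 * real p) * 2 \<le> norm (1 - w)"
      using norm_1_minus_ep[OF r] by (simp add: w_def)
    show "0 < norm (1 - w) * (2 * real (min r (p - r)) / (3 * real p) * 2)"
    proof -
      have pos: "0 < 2 * real (min r (p - r)) / (3 * real p) * 2" using r by simp
      then show ?thesis using \<open>2 * real (min r (p - r)) / (3 * real p) * 2 \<le> norm (1 - w)\<close>
        by (intro mult_pos_pos) linarith+
    qed
  qed simp
  also have "\<dots> = 3 * real p / (2 * real (min r (p - r)))" using r by (simp add: field_simps)
  also have "\<dots> \<le> 3 * real p / real r + 3 * real p / real (p - r)"
  proof -
    have m0: "real (min r (p - r)) > 0" using r by simp
    have m: "1 / real (min r (p - r)) \<le> 1 / real r + 1 / real (p - r)"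
      using r by (cases "r \<le> p - r") (auto simp: min_def)
    have "3 * real p / (2 * real (min r (p - r))) \<le> 3 * real p / real (min r (p - r))"
      using m0 by (intro divide_left_mono) auto
    also have "\<dots> = 3 * real p * (1 / real (min r (p - r)))" by simp
    also have "\<dots> \<le> 3 * real p * (1 / real r + 1 / real (p - r))"
      by (intro mult_left_mono m) simp
    also have "\<dots> = 3 * real p / real r + 3 * real p / real (p - r)" by (simp add: field_simps)
    finally show ?thesis .
  qed
  finally show ?thesis .
qed

lemma harm_bound: "n \<ge> 1 \<Longrightarrow> (\<Sum>r\<in>{1..n}. 1 / real r) \<le> 1 + ln (real n)"
proof (induction n rule: dec_induct)
  case base then show ?case by simp
next
  case (step n)
  have n: "real n \<ge> 1" using step by simp
  have "ln (real n / real (Suc n)) \<le> real n / real (Suc n) - 1"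
    by (rule ln_le_minus_one) (use n in simp)
  moreover have "real n / real (Suc n) - 1 = - 1 / real (Suc n)" by (simp add: field_simps)
  moreover have "ln (real n / real (Suc n)) = ln (real n) - ln (real (Suc n))" by (rule ln_divide_pos) (use n in auto)
  ultimately have l: "1 / real (Suc n) \<le> ln (real (Suc n)) - ln (real n)" by simp
  have "(\<Sum>r\<in>{1..Suc n}. 1 / real r) = (\<Sum>r\<in>{1..n}. 1 / real r) + 1 / real (Suc n)"
    using step(1) by (simp add: sum.cl_ivl_Suc)
  then show ?case using step.IH l by linarith
qed

lemma harm_bound2: assumes "p > 0" shows "(\<Sum>r\<in>{1..<p}. 1 / real r) \<le> 1 + ln (real p)"
proof (cases "p = 1")
  case True then show ?thesis by simp
next
  case False
  have "{1..<p} = {1..p - 1}" using assms by auto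
  then have "(\<Sum>r\<in>{1..<p}. 1 / real r) \<le> 1 + ln (real (p - 1))"
    using harm_bound[of "p - 1"] False assms by simp
  also have "\<dots> \<le> 1 + ln (real p)" using False assms by simp
  finally show ?thesis .
qed

lemma interval_L1:
  assumes p: "p > 0" and I: "zn_interval p I"
  shows "(\<Sum>r<p. norm (FI p I r)) \<le> real p * (7 + 6 * ln (real p))"
proof -
  obtain s len where Id: "I = (\<lambda>i. (s + i) mod p) ` {..<len}" using I by (auto simp: zn_interval_def)
  define L where "L = min len p"
  have IL: "I = (\<lambda>i. (s + i) mod p) ` {..<L}" using Id interval_min[OF p] L_def by simp
  have Lp: "L \<le> p" by (simp add: L_def)
  have Isub: "I \<subseteq> {..<p}" using IL p by auto
  have "norm (FI p I 0) \<le> real p"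
  proof -
    have "FI p I 0 = of_nat (card I)" by (simp add: FI_def)
    moreover have "card I \<le> p" using card_mono[OF finite_lessThan Isub] by simp
    ultimately show ?thesis by simp
  qed
  have "(\<Sum>r<p. norm (FI p I r)) = norm (FI p I 0) + (\<Sum>r\<in>{1..<p}. norm (FI p I r))"
  proof -
    have "{..<p} = insert 0 {1..<p}" using p by auto
    then show ?thesis by simp
  qed
  also have "(\<Sum>r\<in>{1..<p}. norm (FI p I r)) \<le> (\<Sum>r\<in>{1..<p}. 3 * real p / real r + 3 * real p / real (p - r))"
    by (intro sum_mono) (use FI_interval_bound[OF p Lp] IL in auto)
  also have "\<dots> = 3 * real p * (\<Sum>r\<in>{1..<p}. 1 / real r) + 3 * real p * (\<Sum>r\<in>{1..<p}. 1 / real (p - r))"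
    by (simp add: sum.distrib sum_distrib_left)
  also have "(\<Sum>r\<in>{1..<p}. 1 / real (p - r)) = (\<Sum>r\<in>{1..<p}. 1 / real r)"
  proof -
    have "bij_betw (\<lambda>r. p - r) {1..<p} {1..<p}"
      by (rule bij_betw_byWitness[where f' = "\<lambda>r. p - r"]) auto
    then show ?thesis by (rule sum.reindex_bij_betw)
  qed
  also have "3 * real p * (\<Sum>r\<in>{1..<p}. 1 / real r) + 3 * real p * (\<Sum>r\<in>{1..<p}. 1 / real r)
      \<le> 3 * real p * (1 + ln (real p)) + 3 * real p * (1 + ln (real p))"
    using harm_bound2[OF p] p by (intro add_mono mult_left_mono) auto
  finally show ?thesis using \<open>norm (FI p I 0) \<le> real p\<close> by (simp add: algebra_simps)
qed



context etactx
begin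

lemma zn_interval_sub: "zn_interval p I \<Longrightarrow> I \<subseteq> {..<p}"
  using p_pos by (auto simp: zn_interval_def)

lemma discr_bound:
  assumes I: "zn_interval p I" and J: "zn_interval p J"
  shows "discr p J (\<sigma> ` I) ^ 4 \<le> 2 * real (k + 1) * real p ^ 3 * (7 + 6 * ln (real p)) ^ 8"
proof -
  define X where "X = 2 * real (k + 1) * real p ^ 3"
  define M where "M = sqrt (sqrt X)"
  have X0: "X \<ge> 0" unfolding X_def by simp
  have M0: "M \<ge> 0" using X0 by (simp add: M_def)
  have M2: "M ^ 2 = sqrt X" unfolding M_def using X0 by simp
  have M4: "M ^ 4 = X"
  proof -
    have "M ^ 4 = (M ^ 2) ^ 2" by (simp add: power_mult[symmetric])
    then show ?thesis using M2 X0 by simp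
  qed
  have SSM: "norm (SS p \<sigma> r s) \<le> M" if "r < p" "s < p" "(r, s) \<noteq> (0, 0)" for r s
  proof -
    have h: "(norm (SS p \<sigma> r s))^4 \<le> X" using SS_bound[OF that] by (simp add: X_def)
    have "((norm (SS p \<sigma> r s))^2)^2 \<le> X" using h by (simp add: power_mult[symmetric])
    then have "(norm (SS p \<sigma> r s))^2 \<le> sqrt X" by (rule real_le_rsqrt)
    then show ?thesis unfolding M_def by (rule real_le_rsqrt)
  qed
  have Is: "I \<subseteq> {..<p}" and Js: "J \<subseteq> {..<p}" using I J zn_interval_sub by auto
  have fI: "finite I" "finite J" using Is Js finite_subset by auto
  define A where "A = (\<Sum>r<p. norm (FI p I r))"
  define B where "B = (\<Sum>s<p. norm (FI p J s))"
  have A: "A \<le> real p * (7 + 6 * ln (real p))" unfolding A_def by (rule interval_L1[OF p_pos I])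
  have B: "B \<le> real p * (7 + 6 * ln (real p))" unfolding B_def by (rule interval_L1[OF p_pos J])
  have A0: "A \<ge> 0" "B \<ge> 0" by (simp_all add: A_def B_def sum_nonneg)
  define cnt where "cnt = card {x\<in>I. \<sigma> x \<in> J}"
  have cnt: "card (\<sigma> ` I \<inter> J) = cnt"
  proof -
    have "\<sigma> ` I \<inter> J = \<sigma> ` {x\<in>I. \<sigma> x \<in> J}" by auto
    moreover have "inj_on \<sigma> {x\<in>I. \<sigma> x \<in> J}" using Is by (intro inj_on_subset[OF sig_inj]) auto
    ultimately show ?thesis by (simp add: cnt_def card_image)
  qed
  have cI: "card (\<sigma> ` I) = card I" using inj_on_subset[OF sig_inj Is] by (simp add: card_image)
  define T where "T = (\<lambda>z. FI p I (fst z) * FI p J (snd z) * SS p \<sigma> (fst z) (snd z))"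
  let ?P = "{..<p} \<times> {..<p}"
  have "of_nat p ^ 2 * of_nat cnt = (\<Sum>r<p. \<Sum>s<p. FI p I r * FI p J s * SS p \<sigma> r s)"
    unfolding cnt_def by (rule fourier_count[OF p_pos Is Js sig_lt, symmetric])
  also have "\<dots> = (\<Sum>z\<in>?P. T z)" by (simp add: sum.cartesian_product T_def case_prod_beta)
  also have "\<dots> = T (0, 0) + (\<Sum>z\<in>?P - {(0, 0)}. T z)"
    by (rule sum.remove) (use p_pos in auto)
  also have "T (0, 0) = of_nat (card I) * of_nat (card J) * of_nat p"
    by (simp add: T_def FI_def SS_def)
  finally have eq: "of_nat p ^ 2 * of_nat cnt - of_nat (card I) * of_nat (card J) * of_nat p = (\<Sum>z\<in>?P - {(0, 0)}. T z)"
    by simp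
  have "norm (\<Sum>z\<in>?P - {(0, 0)}. T z) \<le> (\<Sum>z\<in>?P - {(0, 0)}. norm (T z))" by (rule norm_sum)
  also have "\<dots> \<le> (\<Sum>z\<in>?P - {(0, 0)}. norm (FI p I (fst z)) * norm (FI p J (snd z)) * M)"
  proof (rule sum_mono)
    fix z assume z: "z \<in> ?P - {(0, 0)}"
    then have "norm (SS p \<sigma> (fst z) (snd z)) \<le> M" by (intro SSM) (auto simp: prod_eq_iff)
    then show "norm (T z) \<le> norm (FI p I (fst z)) * norm (FI p J (snd z)) * M"
      by (simp add: T_def norm_mult mult_left_mono)
  qed
  also have "\<dots> \<le> (\<Sum>z\<in>?P. norm (FI p I (fst z)) * norm (FI p J (snd z)) * M)"
    by (rule sum_mono2) (use M0 in auto)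
  also have "\<dots> = (\<Sum>r<p. \<Sum>s<p. norm (FI p I r) * norm (FI p J s) * M)"
    by (simp add: sum.cartesian_product case_prod_beta)
  also have "\<dots> = A * B * M"
  proof -
    have "A * B * M = (\<Sum>r<p. \<Sum>s<p. norm (FI p I r) * norm (FI p J s)) * M"
      by (simp add: A_def B_def sum_product)
    also have "\<dots> = (\<Sum>r<p. \<Sum>s<p. norm (FI p I r) * norm (FI p J s) * M)"
      by (simp add: sum_distrib_right)
    finally show ?thesis by simp
  qed
  finally have nb: "norm (of_nat p ^ 2 * of_nat cnt - of_nat (card I) * of_nat (card J) * of_nat p :: complex) \<le> A * B * M"
    using eq by simp
  have "norm (of_nat p ^ 2 * of_nat cnt - of_nat (card I) * of_nat (card J) * of_nat p :: complex)
      = \<bar>real p ^ 2 * real cnt - real (card I) * real (card J) * real p\<bar>"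
  proof -
    have "(of_nat p ^ 2 * of_nat cnt - of_nat (card I) * of_nat (card J) * of_nat p :: complex)
        = complex_of_real (real p ^ 2 * real cnt - real (card I) * real (card J) * real p)" by simp
    then show ?thesis by (simp only: norm_of_real)
  qed
  with nb have nb2: "\<bar>real p ^ 2 * real cnt - real (card I) * real (card J) * real p\<bar> \<le> A * B * M" by simp
  have pp: "real p > 0" using p_pos by simp
  have "discr p J (\<sigma> ` I) = \<bar>real p ^ 2 * real cnt - real (card I) * real (card J) * real p\<bar> / real p ^ 2"
  proof -
    have e1: "real p ^ 2 * real cnt - real (card I) * real (card J) * real p = real p * (real p * real cnt - real (card I) * real (card J))"
      by (simp add: algebra_simps power2_eq_square)
    have e2: "real cnt - real (card I) * real (card J) / real p = (real p * real cnt - real (card I) * real (card J)) / real p"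
      using pp by (simp add: field_simps)
    show ?thesis unfolding discr_def cnt cI e1 e2 using pp
      by (simp add: abs_mult abs_divide power2_eq_square)
  qed
  also have "\<dots> \<le> A * B * M / real p ^ 2" using nb2 pp by (simp add: divide_right_mono)
  also have "\<dots> \<le> (real p * (7 + 6 * ln (real p))) * (real p * (7 + 6 * ln (real p))) * M / real p ^ 2"
    using A B A0 M0 pp by (intro divide_right_mono mult_right_mono mult_mono) auto
  also have "\<dots> = M * (7 + 6 * ln (real p)) ^ 2" using pp by (simp add: field_simps power2_eq_square)
  finally have d: "discr p J (\<sigma> ` I) \<le> M * (7 + 6 * ln (real p)) ^ 2" .
  have d0: "discr p J (\<sigma> ` I) \<ge> 0" by (simp add: discr_def)
  have "discr p J (\<sigma> ` I) ^ 4 \<le> (M * (7 + 6 * ln (real p)) ^ 2) ^ 4"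
    by (rule power_mono[OF d d0])
  also have "\<dots> = M ^ 4 * (7 + 6 * ln (real p)) ^ 8" by (simp add: power_mult_distrib power_mult[symmetric])
  finally show ?thesis using M4 X_def by simp
qed

lemma perm_bound:
  "perm_discrepancy p \<sigma> ^ 4 \<le> 2 * real (k + 1) * real p ^ 3 * (7 + 6 * ln (real p)) ^ 8
   \<and> perm_discrepancy p \<sigma> \<ge> 0"
proof -
  define S where "S = {discr p J (\<sigma> ` I) | I J. zn_interval p I \<and> zn_interval p J}"
  have fin: "finite S"
  proof (rule finite_subset)
    show "S \<subseteq> (\<lambda>(I, J). discr p J (\<sigma> ` I)) ` (Pow {..<p} \<times> Pow {..<p})"
      unfolding S_def using zn_interval_sub by fastforce
  qed simp
  have e: "zn_interval p {}" unfolding zn_interval_def by (rule exI[of _ 0], rule exI[of _ 0]) simp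
  have ne: "discr p {} (\<sigma> ` {}) \<in> S" unfolding S_def using e by blast
  have D: "perm_discrepancy p \<sigma> = Max S" by (simp add: perm_discrepancy_def S_def)
  have nonneg: "x \<ge> 0" if "x \<in> S" for x using that by (auto simp: S_def discr_def)
  have "Max S \<in> S" using fin ne by (intro Max_in) auto
  then have M0: "Max S \<ge> 0" by (rule nonneg)
  then have "Max S ^ 4 \<le> 2 * real (k + 1) * real p ^ 3 * (7 + 6 * ln (real p)) ^ 8"
    using \<open>Max S \<in> S\<close> discr_bound by (auto simp: S_def)
  then show ?thesis using D M0 by simp
qed

end



lemma ln_ge_7: assumes "x \<ge> (2187::real)" shows "ln x \<ge> 7"
proof -
  have "exp (7::real) = exp 1 ^ 7" by (simp add: exp_of_nat_mult[symmetric])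
  also have "\<dots> \<le> 3 ^ 7" by (rule power_mono[OF exp_le]) simp
  finally have "exp 7 \<le> x" using assms by simp
  moreover have "x > 0" using assms by simp
  ultimately have "ln (exp 7) \<le> ln x" by (subst ln_le_cancel_iff) auto
  then show ?thesis by simp
qed

theorem mainTheorem9:
  fixes p a k :: "nat \<Rightarrow> nat"
  assumes p_prime: "\<And>n. prime (p n)"
    and p_inf: "filterlim p at_top sequentially"
    and a_unit: "\<And>n. 0 < a n \<and> a n < p n"
    and k_range: "\<And>n. 2 \<le> k n \<and> k n \<le> p n - 2"
    and k_coprime: "\<And>n. gcd (k n) (p n - 1) = 1"
    and k_small: "(\<lambda>n. real (k n)) \<in> o[sequentially](\<lambda>n. real (p n) / (ln (real (p n))) ^ 8)"
  shows "(\<lambda>n. perm_discrepancy (p n) (eta (p n) (a n) (k n))) \<in> o[sequentially](\<lambda>n. real (p n))"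
proof (rule landau_o.smallI)
  fix \<epsilon> :: real assume eps: "\<epsilon> > 0"
  define c :: real where "c = \<epsilon> ^ 4 / (4 * 7 ^ 8)"
  have c0: "c > 0" using eps by (simp add: c_def)
  have ev1: "eventually (\<lambda>n. norm (real (k n)) \<le> c * norm (real (p n) / (ln (real (p n))) ^ 8)) sequentially"
    by (rule landau_o.smallD[OF k_small c0])
  have ev2: "eventually (\<lambda>n. 2187 \<le> p n) sequentially"
    using p_inf by (simp add: filterlim_at_top)
  show "eventually (\<lambda>n. norm (perm_discrepancy (p n) (eta (p n) (a n) (k n))) \<le> \<epsilon> * norm (real (p n))) sequentially"
    using ev1 ev2
  proof eventually_elim
    case (elim n)
    interpret etactx "p n" "a n" "k n"
      using p_prime a_unit k_range k_coprime by unfold_locales auto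
    define P where "P = real (p n)"
    define Lg where "Lg = ln P"
    define D where "D = perm_discrepancy (p n) (eta (p n) (a n) (k n))"
    have P: "P \<ge> 2187" using elim(2) by (simp add: P_def)
    have L7: "Lg \<ge> 7" unfolding Lg_def by (rule ln_ge_7[OF P])
    have Db: "D ^ 4 \<le> 2 * real (k n + 1) * P ^ 3 * (7 + 6 * Lg) ^ 8" and D0: "D \<ge> 0"
      using perm_bound by (simp_all add: D_def P_def Lg_def)
    have kb: "real (k n) \<le> c * (P / Lg ^ 8)"
    proof -
      have "P / Lg ^ 8 > 0" using P L7 by simp
      then show ?thesis using elim(1) by (simp add: P_def Lg_def)
    qed
    have k1: "real (k n + 1) \<le> 2 * real (k n)" using k_ge by simp
    have lg: "(7 + 6 * Lg) ^ 8 \<le> (7 * Lg) ^ 8" using L7 by (intro power_mono) auto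
    have "D ^ 4 \<le> 2 * real (k n + 1) * P ^ 3 * (7 + 6 * Lg) ^ 8" by (rule Db)
    also have "\<dots> \<le> 2 * (2 * real (k n)) * P ^ 3 * (7 * Lg) ^ 8"
      using k1 lg P by (intro mult_mono) auto
    also have "\<dots> \<le> 2 * (2 * (c * (P / Lg ^ 8))) * P ^ 3 * (7 * Lg) ^ 8"
      using kb P by (intro mult_right_mono mult_left_mono) auto
    also have "\<dots> = 4 * 7 ^ 8 * c * P ^ 4"
      using L7 by (simp add: field_simps power_mult_distrib) (simp add: power_Suc[symmetric] del: power_Suc)
    also have "\<dots> = (\<epsilon> * P) ^ 4" by (simp add: c_def power_mult_distrib)
    finally have "D ^ Suc 3 \<le> (\<epsilon> * P) ^ Suc 3" by simp
    then have "D \<le> \<epsilon> * P" by (rule power_le_imp_le_base) (use eps P in simp)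
    then show ?case using D0 P by (simp add: D_def P_def)
  qed
qed


end
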